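(* Let $(\mathcal M,\omega)$ be a $2n$-dimensional symplectic manifold with local coordinates $q^1,\dots,q^{2n}$, equipped with a Weyl-type $*$-product, trace density $t$ and Stratonovich–Weyl correspondence as described in the context. A function $W=W(q^1,\dots,q^{2n})$ in the algebra $\mathcal A$ represents a pure quantum state if and only if: (i) $\int_{\mathcal M}W^{*2}\,t\,\omega^n=\frac{1}{(2\pi\hbar)^n}$; (ii) $W$ is real; (iii) $W^{*2}=\frac{1}{(2\pi\hbar)^n}W$; (iv) $\int_{\mathcal M}W\,t\,\omega^n=1$.
   Context: Setting: $\mathcal H$ is a separable Hilbert space and $\mathcal A_{\mathcal H}$ an algebra of operators on it; $\mathcal A$ is an algebra of smooth complex functions on the symplectic manifold $(\mathcal M,\omega)$ with product a (local, Weyl-type) $*$-product, understood in an integral form when needed, and involution complex conjugation; $W^{*2}=W*W$. The trace density $t=\sum_i\hbar^it_i$ is the real function such that every state functional has the form $A\mapsto\int_{\mathcal M}A*W\,t\,\omega^n$. The Stratonovich–Weyl correspondence $SW:\mathcal A_{\mathcal H}\to\mathcal A$ is a linear bijection with $SW(\hat A^+)=\overline{SW(\hat A)}$, $SW(\hat1)=1$, $SW(\hat A\hat B)=SW(\hat A)*SW(\hat B)$, self-adjoint operators mapped to real functions, and $\mathrm{Tr}\hat A=\frac{1}{(2\pi\hbar)^n}\int_{\mathcal M}SW(\hat A)\,t\,\omega^n$. A function represents a pure state if it equals $SW\big(\frac{1}{(2\pi\hbar)^n}\hat\varrho\big)$ for a density operator $\hat\varrho$ on $\mathcal H$ that is a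 rank-one orthogonal projection. *)

theory Defs
  imports "HOL-Analysis.Analysis"
begin

text \<open>Separable complex Hilbert space, concretely as l2(J) for an index set J of naturals
  (every separable Hilbert space is unitarily isomorphic to such a space).\<close>

definition l2 :: "nat set \<Rightarrow> (nat \<Rightarrow> complex) set" where
  "l2 J = {\<psi>. (\<forall>i. i \<notin> J \<longrightarrow> \<psi> i = 0) \<and> (\<lambda>i. (cmod (\<psi> i))\<^sup>2) summable_on J}"

definition cinner :: "nat set \<Rightarrow> (nat \<Rightarrow> complex) \<Rightarrow> (nat \<Rightarrow> complex) \<Rightarrow> complex" where
  "cinner J \<phi> \<psi> = (\<Sum>\<^sub>\<infinity>i\<in>J. cnj (\<phi> i) * \<psi> i)"

definition hnorm :: "nat set \<Rightarrow> (nat \<Rightarrow> complex) \<Rightarrow> real" where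
  "hnorm J \<psi> = sqrt (Re (cinner J \<psi> \<psi>))"

definition basis_vec :: "nat \<Rightarrow> (nat \<Rightarrow> complex)" where
  "basis_vec j = (\<lambda>i. if i = j then 1 else 0)"

type_synonym op = "(nat \<Rightarrow> complex) \<Rightarrow> (nat \<Rightarrow> complex)"

definition extensional_op :: "nat set \<Rightarrow> op \<Rightarrow> bool" where
  "extensional_op J A \<longleftrightarrow> (\<forall>\<phi>. \<phi> \<notin> l2 J \<longrightarrow> A \<phi> = (\<lambda>_. 0)) \<and> (\<forall>\<phi>\<in>l2 J. A \<phi> \<in> l2 J)"

definition linear_op :: "nat set \<Rightarrow> op \<Rightarrow> bool" where
  "linear_op J A \<longleftrightarrow> (\<forall>\<phi>\<in>l2 J. \<forall>\<psi>\<in>l2 J. \<forall>a b::complex.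
      A (\<lambda>i. a * \<phi> i + b * \<psi> i) = (\<lambda>i. a * A \<phi> i + b * A \<psi> i))"

definition id_op :: "nat set \<Rightarrow> op" where
  "id_op J = (\<lambda>\<phi>. if \<phi> \<in> l2 J then \<phi> else (\<lambda>_. 0))"

definition add_op :: "op \<Rightarrow> op \<Rightarrow> op" where
  "add_op A B = (\<lambda>\<phi> i. A \<phi> i + B \<phi> i)"

definition smult_op :: "complex \<Rightarrow> op \<Rightarrow> op" where
  "smult_op c A = (\<lambda>\<phi> i. c * A \<phi> i)"

definition is_adjoint :: "nat set \<Rightarrow> op \<Rightarrow> op \<Rightarrow> bool" where
  "is_adjoint J A B \<longleftrightarrow> (\<forall>x\<in>l2 J. \<forall>y\<in>l2 J. cinner J (A x) y = cinner J x (B y))"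

definition op_trace :: "nat set \<Rightarrow> op \<Rightarrow> complex" where
  "op_trace J A = (\<Sum>\<^sub>\<infinity>j\<in>J. cinner J (basis_vec j) (A (basis_vec j)))"

definition rank_one_projection :: "nat set \<Rightarrow> op \<Rightarrow> bool" where
  "rank_one_projection J P \<longleftrightarrow> (\<exists>\<psi>\<in>l2 J. hnorm J \<psi> = 1 \<and>
      P = (\<lambda>\<phi>. if \<phi> \<in> l2 J then (\<lambda>i. cinner J \<psi> \<phi> * \<psi> i) else (\<lambda>_. 0)))"

definition density_operator :: "nat set \<Rightarrow> op \<Rightarrow> bool" where
  "density_operator J R \<longleftrightarrow> is_adjoint J R R \<and>
      (\<forall>x\<in>l2 J. Im (cinner J x (R x)) = 0 \<and> Re (cinner J x (R x)) \<ge> 0) \<and> op_trace J R = 1"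

text \<open>Standing assumptions: operator algebra AH on l2 J, function algebra FA on the
  phase space 'm with star product, integration against omega^n given by the measure mu,
  trace density t, Planck constant h > 0, half-dimension n, Stratonovich-Weyl map SW.\<close>
definition SW_setting ::
  "nat set \<Rightarrow> op set \<Rightarrow> ('m \<Rightarrow> complex) set \<Rightarrow>
   (('m \<Rightarrow> complex) \<Rightarrow> ('m \<Rightarrow> complex) \<Rightarrow> ('m \<Rightarrow> complex)) \<Rightarrow>
   'm measure \<Rightarrow> ('m \<Rightarrow> real) \<Rightarrow> real \<Rightarrow> nat \<Rightarrow> (op \<Rightarrow> ('m \<Rightarrow> complex)) \<Rightarrow> bool" where
  "SW_setting J AH FA star \<mu> t h n SW \<longleftrightarrow>
     h > 0 \<and>
     \<comment> \<open>AH is an algebra of (linear, extensional) operators on the Hilbert space\<close>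
     (\<forall>A\<in>AH. extensional_op J A \<and> linear_op J A) \<and>
     id_op J \<in> AH \<and>
     (\<forall>A\<in>AH. \<forall>B\<in>AH. add_op A B \<in> AH \<and> A \<circ> B \<in> AH) \<and>
     (\<forall>c. \<forall>A\<in>AH. smult_op c A \<in> AH) \<and>
     (\<forall>A\<in>AH. \<exists>B\<in>AH. is_adjoint J A B) \<and>
     \<comment> \<open>Stratonovich-Weyl correspondence\<close>
     bij_betw SW AH FA \<and>
     (\<forall>A\<in>AH. \<forall>B\<in>AH. SW (add_op A B) = (\<lambda>x. SW A x + SW B x)) \<and>
     (\<forall>c. \<forall>A\<in>AH. SW (smult_op c A) = (\<lambda>x. c * SW A x)) \<and>
     (\<forall>A\<in>AH. \<forall>B\<in>AH. is_adjoint J A B \<longrightarrow> SW B = (\<lambda>x. cnj (SW A x))) \<and>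
     SW (id_op J) = (\<lambda>_. 1) \<and>
     (\<forall>A\<in>AH. \<forall>B\<in>AH. SW (A \<circ> B) = star (SW A) (SW B)) \<and>
     (\<forall>A\<in>AH. is_adjoint J A A \<longrightarrow> (\<forall>x. Im (SW A x) = 0)) \<and>
     (\<forall>A\<in>AH. op_trace J A =
        (1 / (2 * pi * h) ^ n) * (LINT x|\<mu>. SW A x * complex_of_real (t x)))"

definition represents_pure_state ::
  "nat set \<Rightarrow> op set \<Rightarrow> real \<Rightarrow> nat \<Rightarrow> (op \<Rightarrow> ('m \<Rightarrow> complex)) \<Rightarrow> ('m \<Rightarrow> complex) \<Rightarrow> bool" where
  "represents_pure_state J AH h n SW W \<longleftrightarrow>
     (\<exists>\<rho>\<in>AH. density_operator J \<rho> \<and> rank_one_projection J \<rho> \<and>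
        W = SW (smult_op (complex_of_real (1 / (2 * pi * h) ^ n)) \<rho>))"

end

theory Submission
  imports Defs
begin


lemma zero_l2: "(\<lambda>_. 0) \<in> l2 J"
  by (simp add: l2_def)

lemma basis_l2: "j \<in> J \<Longrightarrow> basis_vec j \<in> l2 J"
proof -
  assume j: "j \<in> J"
  have "(\<lambda>i. (cmod (basis_vec j i))\<^sup>2) summable_on {j}" by simp
  moreover have "(\<lambda>i. (cmod (basis_vec j i))\<^sup>2) summable_on J \<longleftrightarrow> (\<lambda>i. (cmod (basis_vec j i))\<^sup>2) summable_on {j}"
    by (rule summable_on_cong_neutral) (auto simp: basis_vec_def j)
  ultimately show ?thesis using j by (auto simp: l2_def basis_vec_def)
qed

lemma pair_summable:
  assumes "v \<in> l2 J" "w \<in> l2 J"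
  shows "(\<lambda>i. cnj (v i) * w i) summable_on J"
proof -
  have s: "(\<lambda>i. (cmod (v i))\<^sup>2 + (cmod (w i))\<^sup>2) summable_on J"
    using assms by (intro summable_on_add) (auto simp: l2_def)
  have "(\<lambda>i. norm (cnj (v i) * w i)) summable_on J"
  proof (rule summable_on_comparison_test[OF s])
    fix i
    have "cmod (v i) * cmod (w i) \<le> (cmod (v i))\<^sup>2 + (cmod (w i))\<^sup>2"
    proof -
      have "2 * cmod (v i) * cmod (w i) \<le> (cmod (v i))\<^sup>2 + (cmod (w i))\<^sup>2"
        by (rule sum_squares_bound)
      moreover have "0 \<le> cmod (v i) * cmod (w i)" by simp
      ultimately show ?thesis by linarith
    qed
    then show "norm (cnj (v i) * w i) \<le> (cmod (v i))\<^sup>2 + (cmod (w i))\<^sup>2"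
      by (simp add: norm_mult)
  qed auto
  then show ?thesis by (rule abs_summable_summable)
qed

lemma cinner_basis_left: "i \<in> J \<Longrightarrow> cinner J (basis_vec i) v = v i"
proof -
  assume i: "i \<in> J"
  have "cinner J (basis_vec i) v = infsum (\<lambda>j. cnj (basis_vec i j) * v j) {i}"
    unfolding cinner_def by (rule infsum_cong_neutral) (auto simp: basis_vec_def i)
  then show ?thesis by (simp add: basis_vec_def)
qed

lemma cinner_cnj: "cinner J w v = cnj (cinner J v w)"
  unfolding cinner_def infsum_cnj[symmetric] by (simp add: mult.commute)

lemma cinner_basis_right: "i \<in> J \<Longrightarrow> cinner J v (basis_vec i) = cnj (v i)"
  by (subst cinner_cnj) (simp add: cinner_basis_left)

lemma cinner_smult_right: "cinner J v (\<lambda>i. k * w i) = k * cinner J v w"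
  unfolding cinner_def by (simp add: infsum_cmult_right'[symmetric] ac_simps)

lemma cinner_smult_left: "cinner J (\<lambda>i. k * v i) w = cnj k * cinner J v w"
  unfolding cinner_def by (simp add: infsum_cmult_right'[symmetric] ac_simps)

lemma cnj_mult_self: "cnj z * z = complex_of_real ((cmod z)\<^sup>2)"
  by (simp only: complex_norm_square mult.commute)

lemma cnj_mult_self_nonneg: "0 \<le> cnj z * z"
  by (simp add: cnj_mult_self less_eq_complex_def)

lemma cinner_self: "v \<in> l2 J \<Longrightarrow> cinner J v v = complex_of_real (infsum (\<lambda>i. (cmod (v i))\<^sup>2) J)"
proof -
  assume v: "v \<in> l2 J"
  then have "((\<lambda>i. (cmod (v i))\<^sup>2) has_sum infsum (\<lambda>i. (cmod (v i))\<^sup>2) J) J"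
    by (auto simp: l2_def)
  then have "((\<lambda>i. complex_of_real ((cmod (v i))\<^sup>2)) has_sum complex_of_real (infsum (\<lambda>i. (cmod (v i))\<^sup>2) J)) J"
    by (rule has_sum_of_real)
  then show ?thesis unfolding cinner_def cnj_mult_self by (rule infsumI)
qed

lemma lin_smult: "linear_op J A \<Longrightarrow> v \<in> l2 J \<Longrightarrow> A (\<lambda>i. k * v i) = (\<lambda>i. k * A v i)"
  unfolding linear_op_def by (drule bspec, assumption, drule bspec, assumption) (drule spec[of _ k], drule spec[of _ 0], simp)

lemma ext_l2: "extensional_op J A \<Longrightarrow> A v \<in> l2 J"
  unfolding extensional_op_def using zero_l2[of J] by (cases "v \<in> l2 J") auto

lemma op_trace_smult: "op_trace J (smult_op k A) = k * op_trace J A"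
  unfolding op_trace_def smult_op_def by (simp add: cinner_smult_right infsum_cmult_right')



lemma expand:
  assumes v: "v \<in> l2 J" and p: "\<psi> \<in> l2 J" and n1: "cinner J \<psi> \<psi> = 1"
  shows "((\<lambda>i. cnj (v i - cinner J \<psi> v * \<psi> i) * (v i - cinner J \<psi> v * \<psi> i)) has_sum
           (cinner J v v - cnj (cinner J \<psi> v) * cinner J \<psi> v)) J"
proof -
  define L where "L = cinner J \<psi> v"
  have h1: "((\<lambda>i. cnj (v i) * v i) has_sum cinner J v v) J"
    unfolding cinner_def using pair_summable[OF v v] by simp
  have h2: "((\<lambda>i. cnj (v i) * \<psi> i) has_sum cnj L) J"
    unfolding L_def cinner_cnj[of J v \<psi>, symmetric] unfolding cinner_def using pair_summable[OF v p] by simp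
  have h3: "((\<lambda>i. cnj (\<psi> i) * v i) has_sum L) J"
    unfolding L_def cinner_def using pair_summable[OF p v] by simp
  have h4: "((\<lambda>i. cnj (\<psi> i) * \<psi> i) has_sum 1) J"
    using n1 pair_summable[OF p p] unfolding cinner_def by (metis has_sum_infsum)
  have "((\<lambda>i. cnj (v i) * v i + (- L) * (cnj (v i) * \<psi> i) + (- cnj L) * (cnj (\<psi> i) * v i)
           + (cnj L * L) * (cnj (\<psi> i) * \<psi> i)) has_sum
        (cinner J v v + (- L) * cnj L + (- cnj L) * L + (cnj L * L) * 1)) J"
    by (intro has_sum_add has_sum_cmult_right h1 h2 h3 h4)
  note F = this
  have V: "cinner J v v + (- L) * cnj L + (- cnj L) * L + (cnj L * L) * 1 = cinner J v v - cnj L * L"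
    by (simp add: algebra_simps)
  have T: "\<And>i. cnj (v i) * v i + (- L) * (cnj (v i) * \<psi> i) + (- cnj L) * (cnj (\<psi> i) * v i)
           + (cnj L * L) * (cnj (\<psi> i) * \<psi> i) = cnj (v i - L * \<psi> i) * (v i - L * \<psi> i)"
    by (simp add: algebra_simps)
  have "((\<lambda>i. cnj (v i) * v i + (- L) * (cnj (v i) * \<psi> i) + (- cnj L) * (cnj (\<psi> i) * v i)
           + (cnj L * L) * (cnj (\<psi> i) * \<psi> i)) has_sum (cinner J v v - cnj L * L)) J"
    using F unfolding V .
  then have "((\<lambda>i. cnj (v i - L * \<psi> i) * (v i - L * \<psi> i)) has_sum (cinner J v v - cnj L * L)) J"
    by (simp only: T)
  then show ?thesis unfolding L_def .
qed

lemma cinner_self_real: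
  assumes "v \<in> l2 J" shows "Im (cinner J v v) = 0" "Re (cinner J v v) \<ge> 0"
  using cinner_self[OF assms] by (auto intro!: infsum_nonneg)

lemma proj_rank_one:
  assumes ext: "extensional_op J P" and lin: "linear_op J P" and sa: "is_adjoint J P P"
    and idem: "\<And>x. P (P x) = P x" and tr: "op_trace J P = 1"
  shows "rank_one_projection J P"
proof -
  define e where "e = basis_vec"
  define a where "a i = cinner J (e i) (P (e i))" for i
  have el2: "i \<in> J \<Longrightarrow> e i \<in> l2 J" for i unfolding e_def by (rule basis_l2)
  have Pl2: "P x \<in> l2 J" for x by (rule ext_l2[OF ext])
  have sa': "x \<in> l2 J \<Longrightarrow> y \<in> l2 J \<Longrightarrow> cinner J (P x) y = cinner J x (P y)" for x y
    using sa unfolding is_adjoint_def by blast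
  have aP: "i \<in> J \<Longrightarrow> a i = cinner J (P (e i)) (P (e i))" for i
    unfolding a_def using sa'[OF el2 Pl2, of i "e i"] idem by simp
  have trsum: "(a has_sum 1) J"
  proof -
    have "infsum a J = 1" using tr unfolding op_trace_def a_def e_def by simp
    then show ?thesis by (metis has_sum_infsum infsum_not_exists zero_neq_one)
  qed
  obtain j0 where j0: "j0 \<in> J" "a j0 \<noteq> 0"
  proof -
    have "\<exists>j\<in>J. a j \<noteq> 0"
    proof (rule ccontr)
      assume "\<not> ?thesis"
      then have "infsum a J = 0" by (simp add: infsum_0)
      then show False using trsum by (simp add: infsumI)
    qed
    then show ?thesis using that by blast
  qed
  define s where "s = Re (a j0)"
  have aj0: "a j0 = complex_of_real s"
    using cinner_self_real[OF Pl2, of "e j0"] aP[OF j0(1)] unfolding s_def by (simp add: complex_eq_iff)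
  have spos: "s > 0"
  proof -
    have "s \<noteq> 0" using aj0 j0(2) by auto
    moreover have "s \<ge> 0" using cinner_self_real[OF Pl2, of "e j0"] aP[OF j0(1)] unfolding s_def by simp
    ultimately show ?thesis by simp
  qed
  define k where "k = complex_of_real (1 / sqrt s)"
  define \<psi> where "\<psi> = P (\<lambda>i. k * e j0 i)"
  have \<psi>': "\<psi> = (\<lambda>i. k * P (e j0) i)" unfolding \<psi>_def using lin_smult[OF lin el2[OF j0(1)]] .
  have \<psi>l2: "\<psi> \<in> l2 J" unfolding \<psi>_def by (rule Pl2)
  have P\<psi>: "P \<psi> = \<psi>" unfolding \<psi>_def by (rule idem)
  have n1: "cinner J \<psi> \<psi> = 1"
  proof -
    have "cinner J \<psi> \<psi> = cnj k * k * a j0"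
      unfolding \<psi>' by (simp add: cinner_smult_left cinner_smult_right aP[OF j0(1)])
    also have "\<dots> = 1" using spos unfolding k_def aj0
      by (simp flip: of_real_mult)
    finally show ?thesis .
  qed
  have lam: "i \<in> J \<Longrightarrow> cinner J \<psi> (P (e i)) = cnj (\<psi> i)" for i
    using sa'[OF \<psi>l2 el2, of i] P\<psi> cinner_basis_right[of i J \<psi>] unfolding e_def by simp
  have col: "P (e i) = (\<lambda>j. cnj (\<psi> i) * \<psi> j)" if i: "i \<in> J" for i
  proof -
    define r where "r j = P (e i) j - cnj (\<psi> i) * \<psi> j" for j
    have hs: "((\<lambda>j. cnj (r j) * r j) has_sum (a i - \<psi> i * cnj (\<psi> i))) J"
      using expand[OF Pl2 \<psi>l2 n1, of "e i"] lam[OF i] aP[OF i] unfolding r_def by simp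
    have diff_nonneg: "0 \<le> a j - \<psi> j * cnj (\<psi> j)" if "j \<in> J" for j
    proof -
      have "((\<lambda>l. cnj (P (e j) l - cnj (\<psi> j) * \<psi> l) * (P (e j) l - cnj (\<psi> j) * \<psi> l)) has_sum (a j - \<psi> j * cnj (\<psi> j))) J"
        using expand[OF Pl2 \<psi>l2 n1, of "e j"] lam[OF that] aP[OF that] by simp
      then have s: "(\<lambda>l. cnj (P (e j) l - cnj (\<psi> j) * \<psi> l) * (P (e j) l - cnj (\<psi> j) * \<psi> l)) summable_on J"
        and i: "infsum (\<lambda>l. cnj (P (e j) l - cnj (\<psi> j) * \<psi> l) * (P (e j) l - cnj (\<psi> j) * \<psi> l)) J = a j - \<psi> j * cnj (\<psi> j)"
        by (auto simp: has_sum_iff)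
      have "0 \<le> infsum (\<lambda>l. cnj (P (e j) l - cnj (\<psi> j) * \<psi> l) * (P (e j) l - cnj (\<psi> j) * \<psi> l)) J"
        by (rule infsum_nonneg_complex[OF s]) (rule cnj_mult_self_nonneg)
      then show ?thesis using i by simp
    qed
    have "((\<lambda>j. a j + (-1) * (cnj (\<psi> j) * \<psi> j)) has_sum (1 + (-1) * 1)) J"
      using pair_summable[OF \<psi>l2 \<psi>l2] n1 trsum unfolding cinner_def
      by (intro has_sum_add has_sum_cmult_right) (auto simp: has_sum_iff)
    then have "((\<lambda>j. a j - \<psi> j * cnj (\<psi> j)) has_sum 0) J" by (simp add: mult.commute)
    then have "a i - \<psi> i * cnj (\<psi> i) = 0"
      by (rule nonneg_has_sum_le_0D_complex[where f="\<lambda>j. a j - \<psi> j * cnj (\<psi> j)", OF _ order.refl diff_nonneg i])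
    then have hs0: "((\<lambda>j. cnj (r j) * r j) has_sum 0) J" using hs by simp
    have "r j = 0" if "j \<in> J" for j
      using nonneg_has_sum_le_0D_complex[OF hs0 order.refl cnj_mult_self_nonneg that] by simp
    moreover have "r j = 0" if "j \<notin> J" for j
      using that Pl2[of "e i"] \<psi>l2 unfolding r_def l2_def by simp
    ultimately show ?thesis unfolding r_def by (metis eq_iff_diff_eq_0)
  qed
  have form: "P = (\<lambda>\<phi>. if \<phi> \<in> l2 J then (\<lambda>i. cinner J \<psi> \<phi> * \<psi> i) else (\<lambda>_. 0))"
  proof (rule HOL.ext)
    fix \<phi>
    show "P \<phi> = (if \<phi> \<in> l2 J then (\<lambda>i. cinner J \<psi> \<phi> * \<psi> i) else (\<lambda>_. 0))"
    proof (cases "\<phi> \<in> l2 J")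
      case False then show ?thesis using ext unfolding extensional_op_def by simp
    next
      case True
      have "P \<phi> i = cinner J \<psi> \<phi> * \<psi> i" for i
      proof (cases "i \<in> J")
        case iJ: True
        have "P \<phi> i = cinner J (e i) (P \<phi>)" unfolding e_def using cinner_basis_left[OF iJ] by simp
        also have "\<dots> = cinner J (P (e i)) \<phi>" using sa'[OF el2[OF iJ] True] by simp
        also have "\<dots> = \<psi> i * cinner J \<psi> \<phi>" unfolding col[OF iJ] cinner_smult_left by simp
        finally show ?thesis by simp
      next
        case False
        then show ?thesis using Pl2[of \<phi>] \<psi>l2 unfolding l2_def by simp
      qed
      then show ?thesis using True by auto
    qed
  qed
  have "hnorm J \<psi> = 1" unfolding hnorm_def n1 by simp
  then show ?thesis unfolding rank_one_projection_def using \<psi>l2 form by blast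
qed

lemma rank_one_idem:
  assumes "rank_one_projection J P" shows "P (P x) = P x"
proof -
  obtain \<psi> where p: "\<psi> \<in> l2 J" "hnorm J \<psi> = 1"
    and P: "P = (\<lambda>\<phi>. if \<phi> \<in> l2 J then (\<lambda>i. cinner J \<psi> \<phi> * \<psi> i) else (\<lambda>_. 0))"
    using assms unfolding rank_one_projection_def by blast
  have n1: "cinner J \<psi> \<psi> = 1"
  proof -
    have "sqrt (Re (cinner J \<psi> \<psi>)) = 1" using p(2) unfolding hnorm_def .
    then have "Re (cinner J \<psi> \<psi>) = 1" by (metis real_sqrt_eq_1_iff)
    then show ?thesis using cinner_self_real(1)[OF p(1)] by (simp add: complex_eq_iff)
  qed
  have sl2: "(\<lambda>i. L * \<psi> i) \<in> l2 J" for L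
  proof -
    have "(\<lambda>i. (cmod L)\<^sup>2 * (cmod (\<psi> i))\<^sup>2) summable_on J"
      using p(1) unfolding l2_def by (intro summable_on_cmult_right) auto
    then show ?thesis using p(1) unfolding l2_def by (simp add: norm_mult power_mult_distrib)
  qed
  show ?thesis
  proof (cases "x \<in> l2 J")
    case True
    then show ?thesis using sl2 n1 by (simp add: P cinner_smult_right)
  next
    case False
    have "cinner J \<psi> (\<lambda>_. 0) = 0" unfolding cinner_def by simp
    then show ?thesis using False zero_l2 by (simp add: P)
  qed
qed

lemma sa_smult:
  assumes "is_adjoint J A A"
  shows "is_adjoint J (smult_op (complex_of_real r) A) (smult_op (complex_of_real r) A)"
  using assms unfolding is_adjoint_def smult_op_def by (simp add: cinner_smult_left cinner_smult_right)





theorem theorem3p4: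
  fixes J :: "nat set" and AH :: "op set" and FA :: "('m \<Rightarrow> complex) set"
    and star :: "('m \<Rightarrow> complex) \<Rightarrow> ('m \<Rightarrow> complex) \<Rightarrow> ('m \<Rightarrow> complex)"
    and \<mu> :: "'m measure" and t :: "'m \<Rightarrow> real" and h :: real and n :: nat
    and SW :: "op \<Rightarrow> ('m \<Rightarrow> complex)" and W :: "'m \<Rightarrow> complex"
  assumes "SW_setting J AH FA star \<mu> t h n SW"
    and "W \<in> FA"
  shows "represents_pure_state J AH h n SW W \<longleftrightarrow>
     ((LINT x|\<mu>. star W W x * complex_of_real (t x)) = complex_of_real (1 / (2 * pi * h) ^ n)
      \<and> (\<forall>x. Im (W x) = 0)
      \<and> star W W = (\<lambda>x. complex_of_real (1 / (2 * pi * h) ^ n) * W x)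
      \<and> (LINT x|\<mu>. W x * complex_of_real (t x)) = 1)"
proof -
  note S = assms(1)[unfolded SW_setting_def]
  have hpos: "h > 0" using S by blast
  have AHop: "\<And>A. A \<in> AH \<Longrightarrow> extensional_op J A \<and> linear_op J A" using S by blast
  have AHcomp: "\<And>A B. A \<in> AH \<Longrightarrow> B \<in> AH \<Longrightarrow> A \<circ> B \<in> AH" using S by blast
  have AHsm: "\<And>c A. A \<in> AH \<Longrightarrow> smult_op c A \<in> AH" using S by blast
  have AHadj: "\<And>A. A \<in> AH \<Longrightarrow> \<exists>B\<in>AH. is_adjoint J A B" using S by blast
  have bij: "bij_betw SW AH FA" using S by blast
  have SWsm: "\<And>c A. A \<in> AH \<Longrightarrow> SW (smult_op c A) = (\<lambda>x. c * SW A x)" using S by blast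
  have SWadj: "\<And>A B. A \<in> AH \<Longrightarrow> B \<in> AH \<Longrightarrow> is_adjoint J A B \<Longrightarrow> SW B = (\<lambda>x. cnj (SW A x))"
    using S by blast
  have SWcomp: "\<And>A B. A \<in> AH \<Longrightarrow> B \<in> AH \<Longrightarrow> SW (A \<circ> B) = star (SW A) (SW B)" using S by blast
  have SWreal: "\<And>A. A \<in> AH \<Longrightarrow> is_adjoint J A A \<Longrightarrow> (\<forall>x. Im (SW A x) = 0)" using S by blast
  have SWtr: "\<And>A. A \<in> AH \<Longrightarrow> op_trace J A =
        (1 / (2 * pi * h) ^ n) * (LINT x|\<mu>. SW A x * complex_of_real (t x))" using S by blast
  define r where "r = 1 / (2 * pi * h) ^ n"
  define c where "c = complex_of_real r"
  have rpos: "r > 0" unfolding r_def using hpos by simp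
  have cnz: "c \<noteq> 0" unfolding c_def using rpos by simp
  have inj: "\<And>A B. A \<in> AH \<Longrightarrow> B \<in> AH \<Longrightarrow> SW A = SW B \<Longrightarrow> A = B"
    using bij unfolding bij_betw_def inj_on_def by blast
  show ?thesis unfolding r_def[symmetric] c_def[symmetric]
  proof
    assume "represents_pure_state J AH h n SW W"
    then obtain \<rho> where \<rho>: "\<rho> \<in> AH" "density_operator J \<rho>" "rank_one_projection J \<rho>"
      and W: "W = SW (smult_op c \<rho>)"
      unfolding represents_pure_state_def r_def[symmetric] c_def[symmetric] by blast
    have ext: "extensional_op J \<rho>" and lin: "linear_op J \<rho>" using AHop[OF \<rho>(1)] by auto
    have sa: "is_adjoint J \<rho> \<rho>" and tr: "op_trace J \<rho> = 1"
      using \<rho>(2) unfolding density_operator_def by auto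
    have idem: "\<rho> (\<rho> x) = \<rho> x" for x by (rule rank_one_idem[OF \<rho>(3)])
    define C where "C = smult_op c \<rho>"
    have C: "C \<in> AH" unfolding C_def by (rule AHsm[OF \<rho>(1)])
    have "is_adjoint J C C" unfolding C_def c_def by (rule sa_smult[OF sa])
    then have real: "\<forall>x. Im (W x) = 0" using SWreal[OF C] W C_def by simp
    have CC: "C \<circ> C = smult_op c C"
    proof (rule HOL.ext)
      fix x
      have "\<rho> (\<lambda>i. c * \<rho> x i) = (\<lambda>i. c * \<rho> (\<rho> x) i)" by (rule lin_smult[OF lin ext_l2[OF ext]])
      then show "(C \<circ> C) x = smult_op c C x" unfolding C_def smult_op_def by (simp add: idem)
    qed
    have sq: "star W W = (\<lambda>x. c * W x)"
      using SWcomp[OF C C] CC SWsm[OF C, of c] W C_def by simp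
    have "op_trace J C = c" unfolding C_def op_trace_smult tr by simp
    then have "c * (LINT x|\<mu>. W x * complex_of_real (t x)) = c"
      using SWtr[OF C] W C_def unfolding c_def r_def by simp
    then have int1: "(LINT x|\<mu>. W x * complex_of_real (t x)) = 1" using cnz by simp
    have "(LINT x|\<mu>. star W W x * complex_of_real (t x)) = (LINT x|\<mu>. c * (W x * complex_of_real (t x)))"
      unfolding sq by (simp add: mult.assoc)
    also have "\<dots> = c" using int1 by simp
    finally show "(LINT x|\<mu>. star W W x * complex_of_real (t x)) = c
      \<and> (\<forall>x. Im (W x) = 0) \<and> star W W = (\<lambda>x. c * W x) \<and> (LINT x|\<mu>. W x * complex_of_real (t x)) = 1"
      using real sq int1 by blast
  next
    assume H: "(LINT x|\<mu>. star W W x * complex_of_real (t x)) = c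
      \<and> (\<forall>x. Im (W x) = 0) \<and> star W W = (\<lambda>x. c * W x) \<and> (LINT x|\<mu>. W x * complex_of_real (t x)) = 1"
    obtain A where A: "A \<in> AH" "SW A = W" using bij assms(2) unfolding bij_betw_def by blast
    have ext: "extensional_op J A" and lin: "linear_op J A" using AHop[OF A(1)] by auto
    have AA: "A \<circ> A = smult_op c A"
      using inj[OF AHcomp[OF A(1) A(1)] AHsm[OF A(1)]] SWcomp[OF A(1) A(1)] SWsm[OF A(1)] A(2) H by simp
    obtain B where B: "B \<in> AH" "is_adjoint J A B" using AHadj[OF A(1)] by blast
    have "SW B = W" using SWadj[OF A(1) B] A(2) H by (auto simp: complex_eq_iff)
    then have "B = A" using inj[OF B(1) A(1)] A(2) by simp
    then have saA: "is_adjoint J A A" using B by simp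
    define k where "k = complex_of_real (1 / r)"
    have kc: "k * c = 1" unfolding k_def c_def using rpos by (simp flip: of_real_mult)
    define \<rho> where "\<rho> = smult_op k A"
    have \<rho>AH: "\<rho> \<in> AH" unfolding \<rho>_def by (rule AHsm[OF A(1)])
    have ext\<rho>: "extensional_op J \<rho>" and lin\<rho>: "linear_op J \<rho>" using AHop[OF \<rho>AH] by auto
    have sa: "is_adjoint J \<rho> \<rho>" unfolding \<rho>_def k_def by (rule sa_smult[OF saA])
    have cr: "smult_op c \<rho> = A" unfolding \<rho>_def smult_op_def
      by (simp add: mult.assoc[symmetric] mult.commute[of c k] kc)
    have idem: "\<rho> (\<rho> x) = \<rho> x" for x
    proof -
      have "A (\<lambda>i. k * A x i) = (\<lambda>i. k * A (A x) i)" by (rule lin_smult[OF lin ext_l2[OF ext]])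
      moreover have "A (A x) = (\<lambda>i. c * A x i)" using fun_cong[OF AA, of x] by (simp add: smult_op_def)
      ultimately show ?thesis unfolding \<rho>_def smult_op_def
        by (simp add: mult.assoc[symmetric] kc)
    qed
    have tr: "op_trace J \<rho> = 1"
      unfolding \<rho>_def op_trace_smult SWtr[OF A(1)] A(2) using H kc unfolding c_def r_def by simp
    have pos: "Im (cinner J x (\<rho> x)) = 0 \<and> Re (cinner J x (\<rho> x)) \<ge> 0" if x: "x \<in> l2 J" for x
    proof -
      have "cinner J (\<rho> x) (\<rho> x) = cinner J x (\<rho> (\<rho> x))"
        using sa x ext_l2[OF ext\<rho>] unfolding is_adjoint_def by blast
      then have "cinner J x (\<rho> x) = cinner J (\<rho> x) (\<rho> x)" by (simp add: idem)
      then show ?thesis using cinner_self_real[OF ext_l2[OF ext\<rho>]] by simp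
    qed
    have dens: "density_operator J \<rho>" unfolding density_operator_def using sa pos tr by blast
    have r1: "rank_one_projection J \<rho>" by (rule proj_rank_one[OF ext\<rho> lin\<rho> sa idem tr])
    show "represents_pure_state J AH h n SW W"
      unfolding represents_pure_state_def r_def[symmetric] c_def[symmetric]
      using \<rho>AH dens r1 cr A(2) by metis
  qed
qed


end
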